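(* Let $G$ be an SE-graph and let $P,Q$ be standard, weakly intersecting directed paths in $G$ with $\alpha(t_P)=\alpha(s_Q)$ and $\beta(t_P)\ge\beta(s_Q)$. Then $w(P)w(Q)=q\,w(Q)w(P)$.
   Context: Fix a field $\mathbb K$, $q\in\mathbb K^\ast$. An SE-graph is a finite directed graph $G=(V,E)$ embedded in the plane (planar) whose edges are horizontal directed to the right (H-edges) or vertical directed downward (V-edges), with sources $r_1,\dots,r_m$ on a vertical line in this order upward and sinks $c_1,\dots,c_n$ on a horizontal line in order left to right, sources incident only to H-edges and sinks only to V-edges, every vertex lying on a directed source-to-sink path. Here the sources lie on the ray $\{0\}\times\mathbb R_{\ge0}$ and the sinks on the ray $\mathbb R_{\ge 0}\times\{0\}$; a point $v$ has coordinates $(\alpha(v),\beta(v))$. Standing convention: two vertices have the same first (resp. second) coordinate if and only if they lie on a common vertical (resp. horizontal) directed path of $G$. Let $W$ be the inner vertices; $\mathcal L_G$ is the $\mathbb K$-algebra of Laurent polynomials in $W$ with, for distinct $u,v\in W$: $uv=qvu$ if there is a directed horizontal path from $u$ to $v$; $vu=quv$ if there is a directed vertical path from $u$ to $v$; $uv=vu$ otherwise. Edge weights: $w(e)=v$ if $e=(u,v)$ with $u$ a source; $w(e)=u^{-1}v$ for an H-edge $e=(u,v)$ with $u,v\in W$; $w(e)=1$ for V-edges. The weight of a directed path is the ordered product of its edge weights. For a directed path $P$, $s_P,t_P$ are its first and last vertices; $P$ is standard if it has at least one H-edge. $P,Q$ are weakly intersecting if $P\cap Q=\{s_P,t_P\}\cap\{s_Q,t_Q\}$.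 *)

theory Defs
  imports "HOL-Analysis.Analysis"
begin

type_synonym pt = "real \<times> real"

text \<open>A point v has coordinates (alpha v, beta v) = (fst v, snd v).\<close>

definition hedge :: "pt \<Rightarrow> pt \<Rightarrow> bool" where
  "hedge u v \<longleftrightarrow> snd u = snd v \<and> fst u < fst v"

definition vedge :: "pt \<Rightarrow> pt \<Rightarrow> bool" where
  "vedge u v \<longleftrightarrow> fst u = fst v \<and> snd v < snd u"

definition hrel :: "(pt \<times> pt) set \<Rightarrow> (pt \<times> pt) set" where
  "hrel E = {(u,v). (u,v) \<in> E \<and> hedge u v}"

definition vrel :: "(pt \<times> pt) set \<Rightarrow> (pt \<times> pt) set" where
  "vrel E = {(u,v). (u,v) \<in> E \<and> vedge u v}"

definition se_graph :: "pt set \<Rightarrow> (pt \<times> pt) set \<Rightarrow> pt list \<Rightarrow> pt list \<Rightarrow> bool" where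
  "se_graph V E rs cs \<longleftrightarrow>
     finite V \<and> E \<subseteq> V \<times> V \<and>
     (\<forall>(u,v)\<in>E. hedge u v \<or> vedge u v) \<and>
     \<comment> \<open>planarity of the embedding\<close>
     (\<forall>e\<in>E. \<forall>e'\<in>E. e \<noteq> e' \<longrightarrow>
        closed_segment (fst e) (snd e) \<inter> closed_segment (fst e') (snd e')
          \<subseteq> {fst e, snd e} \<inter> {fst e', snd e'}) \<and>
     (\<forall>x\<in>V. \<forall>(u,v)\<in>E. x \<in> closed_segment u v \<longrightarrow> x = u \<or> x = v) \<and>
     \<comment> \<open>sources\<close>
     set rs \<subseteq> V \<and> sorted_wrt (\<lambda>a b. snd a < snd b) rs \<and>
     (\<forall>r\<in>set rs. fst r = 0 \<and> snd r \<ge> 0) \<and>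
     (\<forall>(u,v)\<in>E. v \<notin> set rs) \<and>
     (\<forall>(u,v)\<in>E. u \<in> set rs \<longrightarrow> hedge u v) \<and>
     \<comment> \<open>sinks\<close>
     set cs \<subseteq> V \<and> sorted_wrt (\<lambda>a b. fst a < fst b) cs \<and>
     (\<forall>c\<in>set cs. snd c = 0 \<and> fst c \<ge> 0) \<and>
     (\<forall>(u,v)\<in>E. u \<notin> set cs) \<and>
     (\<forall>(u,v)\<in>E. v \<in> set cs \<longrightarrow> vedge u v) \<and>
     set rs \<inter> set cs = {} \<and>
     \<comment> \<open>every vertex lies on a directed source-to-sink path\<close>
     (\<forall>v\<in>V. \<exists>r\<in>set rs. \<exists>c\<in>set cs. (r,v) \<in> E\<^sup>* \<and> (v,c) \<in> E\<^sup>*) \<and>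
     \<comment> \<open>standing convention on coordinates\<close>
     (\<forall>u\<in>V. \<forall>v\<in>V. u \<noteq> v \<longrightarrow> \<not> (u \<in> set rs \<and> v \<in> set rs) \<longrightarrow>
        (fst u = fst v \<longleftrightarrow> (u,v) \<in> (vrel E)\<^sup>+ \<or> (v,u) \<in> (vrel E)\<^sup>+)) \<and>
     (\<forall>u\<in>V. \<forall>v\<in>V. u \<noteq> v \<longrightarrow> \<not> (u \<in> set cs \<and> v \<in> set cs) \<longrightarrow>
        (snd u = snd v \<longleftrightarrow> (u,v) \<in> (hrel E)\<^sup>+ \<or> (v,u) \<in> (hrel E)\<^sup>+))"

definition inner :: "pt set \<Rightarrow> pt list \<Rightarrow> pt list \<Rightarrow> pt set" where
  "inner V rs cs = V - set rs - set cs"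

text \<open>Commutation exponent: for inner u, v we have u v = q^(lam E u v) v u in L_G.\<close>
definition lam :: "(pt \<times> pt) set \<Rightarrow> pt \<Rightarrow> pt \<Rightarrow> int" where
  "lam E u v =
     (if (u,v) \<in> (hrel E)\<^sup>+ then 1
      else if (u,v) \<in> (vrel E)\<^sup>+ then -1
      else if (v,u) \<in> (hrel E)\<^sup>+ then -1
      else if (v,u) \<in> (vrel E)\<^sup>+ then 1
      else 0)"

text \<open>Auxiliary total order on vertices (lexicographic) used to fix ordered monomials.\<close>
definition vlt :: "pt \<Rightarrow> pt \<Rightarrow> bool" where
  "vlt u v \<longleftrightarrow> fst u < fst v \<or> (fst u = fst v \<and> snd u < snd v)"

text \<open>The quantum torus L_G is modelled as the K-vector space with basis the ordered
  monomials M(a) = prod_{i in W, increasing} i^(a i), a : W -> Z (elements are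
  finitely supported coefficient functions); then M(a) M(b) = q^(twist a b) M(a+b).\<close>
definition twist :: "pt set \<Rightarrow> (pt \<times> pt) set \<Rightarrow> pt list \<Rightarrow> pt list \<Rightarrow>
    (pt \<Rightarrow> int) \<Rightarrow> (pt \<Rightarrow> int) \<Rightarrow> int" where
  "twist V E rs cs a b =
     (\<Sum>i\<in>inner V rs cs. \<Sum>j\<in>{j\<in>inner V rs cs. vlt j i}. lam E i j * a i * b j)"

definition qmul :: "pt set \<Rightarrow> (pt \<times> pt) set \<Rightarrow> pt list \<Rightarrow> pt list \<Rightarrow> 'k::field \<Rightarrow>
    ((pt \<Rightarrow> int) \<Rightarrow> 'k) \<Rightarrow> ((pt \<Rightarrow> int) \<Rightarrow> 'k) \<Rightarrow> ((pt \<Rightarrow> int) \<Rightarrow> 'k)" where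
  "qmul V E rs cs q f g = (\<lambda>c.
     \<Sum>p\<in>{(a,b). f a \<noteq> 0 \<and> g b \<noteq> 0 \<and> (\<lambda>x. a x + b x) = c}.
        f (fst p) * g (snd p) * q powi twist V E rs cs (fst p) (snd p))"

definition mono :: "(pt \<Rightarrow> int) \<Rightarrow> ((pt \<Rightarrow> int) \<Rightarrow> 'k::field)" where
  "mono a = (\<lambda>c. if c = a then 1 else 0)"

definition unitv :: "pt \<Rightarrow> (pt \<Rightarrow> int)" where
  "unitv v = (\<lambda>u. if u = v then 1 else 0)"

definition ewt :: "pt set \<Rightarrow> (pt \<times> pt) set \<Rightarrow> pt list \<Rightarrow> pt list \<Rightarrow> 'k::field \<Rightarrow>
    pt \<times> pt \<Rightarrow> ((pt \<Rightarrow> int) \<Rightarrow> 'k)" where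
  "ewt V E rs cs q e =
     (if fst e \<in> set rs then mono (unitv (snd e))
      else if hedge (fst e) (snd e)
        then qmul V E rs cs q (mono (\<lambda>x. - unitv (fst e) x)) (mono (unitv (snd e)))
      else mono (\<lambda>x. 0))"

definition dpath :: "(pt \<times> pt) set \<Rightarrow> pt list \<Rightarrow> bool" where
  "dpath E P \<longleftrightarrow> length P \<ge> 2 \<and> (\<forall>i < length P - 1. (P ! i, P ! Suc i) \<in> E)"

definition standard :: "(pt \<times> pt) set \<Rightarrow> pt list \<Rightarrow> bool" where
  "standard E P \<longleftrightarrow> dpath E P \<and> (\<exists>i < length P - 1. hedge (P ! i) (P ! Suc i))"

definition weakly_intersecting :: "pt list \<Rightarrow> pt list \<Rightarrow> bool" where
  "weakly_intersecting P Q \<longleftrightarrow>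
     set P \<inter> set Q = {hd P, last P} \<inter> {hd Q, last Q}"

definition pwt :: "pt set \<Rightarrow> (pt \<times> pt) set \<Rightarrow> pt list \<Rightarrow> pt list \<Rightarrow> 'k::field \<Rightarrow>
    pt list \<Rightarrow> ((pt \<Rightarrow> int) \<Rightarrow> 'k)" where
  "pwt V E rs cs q P =
     foldr (qmul V E rs cs q) (map (ewt V E rs cs q) (zip P (tl P))) (mono (\<lambda>x. 0))"

end

theory Submission
  imports Defs
begin

lemma hrel_tr: "(u,v) \<in> (hrel E)\<^sup>+ \<Longrightarrow> snd u = snd v \<and> fst u < fst v"
  by (induction rule: trancl_induct) (auto simp: hrel_def hedge_def)

lemma vrel_tr: "(u,v) \<in> (vrel E)\<^sup>+ \<Longrightarrow> fst u = fst v \<and> snd v < snd u"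
  by (induction rule: trancl_induct) (auto simp: vrel_def vedge_def)

lemma ex_hh: "(u,v) \<in> (hrel E)\<^sup>+ \<Longrightarrow> (v,u) \<in> (hrel E)\<^sup>+ \<Longrightarrow> False"
  using hrel_tr[of u v E] hrel_tr[of v u E] by linarith
lemma ex_vv: "(u,v) \<in> (vrel E)\<^sup>+ \<Longrightarrow> (v,u) \<in> (vrel E)\<^sup>+ \<Longrightarrow> False"
  using vrel_tr[of u v E] vrel_tr[of v u E] by linarith
lemma ex_hv: "(u,v) \<in> (hrel E)\<^sup>+ \<Longrightarrow> (u,v) \<in> (vrel E)\<^sup>+ \<Longrightarrow> False"
  using hrel_tr[of u v E] vrel_tr[of u v E] by linarith
lemma ex_hv': "(u,v) \<in> (hrel E)\<^sup>+ \<Longrightarrow> (v,u) \<in> (vrel E)\<^sup>+ \<Longrightarrow> False"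
  using hrel_tr[of u v E] vrel_tr[of v u E] by linarith

lemma bool_anti: "\<not>(A\<and>B) \<Longrightarrow> \<not>(C\<and>D) \<Longrightarrow> \<not>(A\<and>C) \<Longrightarrow> \<not>(A\<and>D) \<Longrightarrow> \<not>(B\<and>C) \<Longrightarrow> \<not>(B\<and>D) \<Longrightarrow>
  (if B then 1 else if D then -1 else if A then -1 else if C then 1 else 0) =
   - (if A then 1 else if C then -1 else if B then -1 else if D then 1 else (0::int))"
  by auto

lemma lam_anti: "lam E v u = - lam E u v"
  unfolding lam_def
  apply (rule bool_anti)
  using ex_hh[of u v E] ex_vv[of u v E] ex_hv[of u v E] ex_hv'[of u v E] ex_hv[of v u E] ex_hv'[of v u E]
  by blast+

lemma lam_refl: "lam E u u = 0"
  using ex_hh[of u u E] ex_vv[of u u E] unfolding lam_def by auto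

lemma lam_zero: "fst u \<noteq> fst v \<Longrightarrow> snd u \<noteq> snd v \<Longrightarrow> lam E u v = 0"
proof -
  assume a: "fst u \<noteq> fst v" "snd u \<noteq> snd v"
  have "(u,v) \<notin> (hrel E)\<^sup>+" "(v,u) \<notin> (hrel E)\<^sup>+" "(u,v) \<notin> (vrel E)\<^sup>+" "(v,u) \<notin> (vrel E)\<^sup>+"
    using a hrel_tr[of u v E] hrel_tr[of v u E] vrel_tr[of u v E] vrel_tr[of v u E] by auto
  then show ?thesis unfolding lam_def by simp
qed


definition sm :: "'k::field \<Rightarrow> (pt \<Rightarrow> int) \<Rightarrow> ((pt\<Rightarrow>int) \<Rightarrow> 'k)" where
  "sm \<alpha> a = (\<lambda>c. if c = a then \<alpha> else 0)"

lemma qmul_sm: assumes "\<alpha> \<noteq> 0" "\<beta> \<noteq> 0"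
  shows "qmul V E rs cs q (sm \<alpha> a) (sm \<beta> b) = sm (\<alpha>*\<beta>*q powi twist V E rs cs a b) (\<lambda>x. a x + b x)"
proof
  fix c
  have e: "{(a',b'). sm \<alpha> a a' \<noteq> 0 \<and> sm \<beta> b b' \<noteq> 0 \<and> (\<lambda>x. a' x + b' x) = c} = (if c = (\<lambda>x. a x + b x) then {(a,b)} else {})"
    using assms by (auto simp: sm_def)
  show "qmul V E rs cs q (sm \<alpha> a) (sm \<beta> b) c = sm (\<alpha>*\<beta>*q powi twist V E rs cs a b) (\<lambda>x. a x + b x) c"
    unfolding qmul_def e by (simp add: sm_def)
qed

lemma mono_sm: "mono a = sm 1 a" unfolding mono_def sm_def by simp

definition exv :: "pt list \<Rightarrow> pt \<times> pt \<Rightarrow> pt \<Rightarrow> int" where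
 "exv rs e = (if fst e \<in> set rs then unitv (snd e) else if hedge (fst e) (snd e)
     then (\<lambda>x. - unitv (fst e) x + unitv (snd e) x) else (\<lambda>x. 0))"

lemma ewt_sm: assumes "q \<noteq> 0" shows "\<exists>\<gamma>. \<gamma> \<noteq> 0 \<and> ewt V E rs cs q e = sm \<gamma> (exv rs e)"
proof (cases "fst e \<in> set rs")
  case True then show ?thesis by (intro exI[of _ 1]) (auto simp: ewt_def exv_def mono_sm)
next
  case False
  show ?thesis
  proof (cases "hedge (fst e) (snd e)")
    case True
    have "ewt V E rs cs q e = sm (1*1*q powi twist V E rs cs (\<lambda>x. - unitv (fst e) x) (unitv (snd e))) (exv rs e)"
      using False True unfolding ewt_def exv_def mono_sm by (simp add: qmul_sm)
    then show ?thesis using assms by (intro exI[of _ "1*1*q powi twist V E rs cs (\<lambda>x. - unitv (fst e) x) (unitv (snd e))"]) simp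
  next
    case F2: False
    then show ?thesis using False by (intro exI[of _ 1]) (auto simp: ewt_def exv_def mono_sm)
  qed
qed

lemma foldr_sm: assumes "\<forall>e\<in>set es. \<exists>\<gamma>. \<gamma>\<noteq>0 \<and> f e = sm \<gamma> (g e)" "q \<noteq> 0"
  shows "\<exists>\<gamma>. \<gamma> \<noteq> 0 \<and> foldr (qmul V E rs cs q) (map f es) (sm 1 (\<lambda>x. 0))
           = sm \<gamma> (\<lambda>x. sum_list (map (\<lambda>e. g e x) es))"
  using assms(1)
proof (induction es)
  case Nil then show ?case by (intro exI[of _ 1]) auto
next
  case (Cons e es)
  then obtain \<gamma> where g: "\<gamma> \<noteq> 0" "foldr (qmul V E rs cs q) (map f es) (sm 1 (\<lambda>x. 0))
           = sm \<gamma> (\<lambda>x. sum_list (map (\<lambda>e. g e x) es))" by auto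
  from Cons.prems obtain \<gamma>1 where g1: "\<gamma>1 \<noteq> 0" "f e = sm \<gamma>1 (g e)" by auto
  show ?case
    using g g1 assms(2)
    by (intro exI[of _ "\<gamma>1 * \<gamma> * q powi twist V E rs cs (g e) (\<lambda>x. \<Sum>e\<leftarrow>es. g e x)"]) (auto simp: qmul_sm)
qed

lemma pwt_sm: assumes "q \<noteq> 0"
  shows "\<exists>\<gamma>. \<gamma> \<noteq> 0 \<and> pwt V E rs cs q P = sm \<gamma> (\<lambda>x. sum_list (map (\<lambda>e. exv rs e x) (zip P (tl P))))"
  unfolding pwt_def mono_sm
  by (rule foldr_sm) (use ewt_sm assms in auto)

lemma final_alg:
  assumes q: "q \<noteq> 0" and P: "pwt V E rs cs q P = sm \<gamma> a" "\<gamma> \<noteq> 0"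
    and Q: "pwt V E rs cs q Q = sm \<delta> b" "\<delta> \<noteq> 0"
    and t: "twist V E rs cs a b = twist V E rs cs b a + 1"
  shows "qmul V E rs cs q (pwt V E rs cs q P) (pwt V E rs cs q Q)
       = (\<lambda>c. q * qmul V E rs cs q (pwt V E rs cs q Q) (pwt V E rs cs q P) c)"
proof -
  have ab: "(\<lambda>x. b x + a x) = (\<lambda>x. a x + b x)" by (simp add: add.commute)
  have pw: "q powi twist V E rs cs a b = q * q powi twist V E rs cs b a"
    using q by (simp add: t power_int_add)
  show ?thesis unfolding P Q using P(2) Q(2) q
    by (simp add: qmul_sm ab pw) (auto simp: sm_def)
qed

definition bl :: "pt set \<Rightarrow> (pt\<times>pt) set \<Rightarrow> (pt\<Rightarrow>int) \<Rightarrow> (pt\<Rightarrow>int) \<Rightarrow> int" where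
  "bl W E a b = (\<Sum>i\<in>W. \<Sum>j\<in>W. lam E i j * a i * b j)"

lemma vlt_cases: "(if vlt j i then lam E i j * a i * b j else 0) - (if vlt i j then - (lam E i j * a i * b j) else 0)
   = lam E i j * a i * b j"
proof (cases "i = j")
  case True then show ?thesis by (simp add: lam_refl vlt_def)
next
  case False
  then have "vlt i j \<noteq> vlt j i" unfolding vlt_def by (auto simp: prod_eq_iff)
  then show ?thesis by auto
qed

lemma twist_diff: assumes fin: "finite (inner V rs cs)"
  shows "twist V E rs cs a b = twist V E rs cs b a + bl (inner V rs cs) E a b"
proof -
  let ?W = "inner V rs cs"
  have t1: "twist V E rs cs a b = (\<Sum>i\<in>?W. \<Sum>j\<in>?W. if vlt j i then lam E i j * a i * b j else 0)"
    unfolding twist_def by (simp add: sum.inter_filter[OF fin])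
  have t2: "twist V E rs cs b a = (\<Sum>i\<in>?W. \<Sum>j\<in>?W. if vlt j i then lam E i j * b i * a j else 0)"
    unfolding twist_def by (simp add: sum.inter_filter[OF fin])
  also have "\<dots> = (\<Sum>j\<in>?W. \<Sum>i\<in>?W. if vlt j i then lam E i j * b i * a j else 0)"
    by (rule sum.swap)
  also have "\<dots> = (\<Sum>j\<in>?W. \<Sum>i\<in>?W. if vlt j i then - (lam E j i * a j * b i) else 0)"
  proof (intro sum.cong refl)
    fix i j
    have "lam E i j = - lam E j i" by (rule lam_anti)
    then show "(if vlt j i then lam E i j * b i * a j else 0) = (if vlt j i then - (lam E j i * a j * b i) else 0)"
      by simp
  qed
  finally have t2': "twist V E rs cs b a = (\<Sum>j\<in>?W. \<Sum>i\<in>?W. if vlt j i then - (lam E j i * a j * b i) else 0)" .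
  have "twist V E rs cs a b - twist V E rs cs b a =
     (\<Sum>i\<in>?W. \<Sum>j\<in>?W. (if vlt j i then lam E i j * a i * b j else 0) - (if vlt i j then - (lam E i j * a i * b j) else 0))"
    unfolding t1 t2' by (simp add: sum_subtractf)
  also have "\<dots> = bl ?W E a b" unfolding bl_def by (simp add: vlt_cases)
  finally show ?thesis by simp
qed
lemma bl_sum_left: "bl W E (\<lambda>x. \<Sum>k\<in>K. f k x) b = (\<Sum>k\<in>K. bl W E (f k) b)"
proof -
  have "bl W E (\<lambda>x. \<Sum>k\<in>K. f k x) b = (\<Sum>i\<in>W. \<Sum>j\<in>W. \<Sum>k\<in>K. lam E i j * f k i * b j)"
    unfolding bl_def by (simp add: sum_distrib_left sum_distrib_right)
  also have "\<dots> = (\<Sum>i\<in>W. \<Sum>k\<in>K. \<Sum>j\<in>W. lam E i j * f k i * b j)"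
    by (rule sum.cong[OF refl], rule sum.swap)
  also have "\<dots> = (\<Sum>k\<in>K. \<Sum>i\<in>W. \<Sum>j\<in>W. lam E i j * f k i * b j)"
    by (rule sum.swap)
  finally show ?thesis unfolding bl_def .
qed

lemma bl_sum_right: "bl W E a (\<lambda>x. \<Sum>k\<in>K. f k x) = (\<Sum>k\<in>K. bl W E a (f k))"
proof -
  have "bl W E a (\<lambda>x. \<Sum>k\<in>K. f k x) = (\<Sum>i\<in>W. \<Sum>j\<in>W. \<Sum>k\<in>K. lam E i j * a i * f k j)"
    unfolding bl_def by (simp add: sum_distrib_left sum_distrib_right)
  also have "\<dots> = (\<Sum>i\<in>W. \<Sum>k\<in>K. \<Sum>j\<in>W. lam E i j * a i * f k j)"
    by (rule sum.cong[OF refl], rule sum.swap)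
  also have "\<dots> = (\<Sum>k\<in>K. \<Sum>i\<in>W. \<Sum>j\<in>W. lam E i j * a i * f k j)"
    by (rule sum.swap)
  finally show ?thesis unfolding bl_def .
qed

lemma bl_unit_left: assumes "finite W" shows "bl W E (unitv z) b = (if z \<in> W then (\<Sum>j\<in>W. lam E z j * b j) else 0)"
proof -
  have "\<And>i. (\<Sum>j\<in>W. lam E i j * unitv z i * b j) = (if i = z then (\<Sum>j\<in>W. lam E z j * b j) else 0)"
    unfolding unitv_def by auto
  then show ?thesis unfolding bl_def using assms by simp
qed

lemma bl_unit_right: "finite W \<Longrightarrow> (\<Sum>j\<in>W. lam E z j * unitv y j) = (if y \<in> W then lam E z y else 0)"
  unfolding unitv_def by (simp add: if_distrib[of "\<lambda>t. _ * t"] cong: if_cong)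

lemma bl_hedge_left: "bl W E (\<lambda>x. - unitv u x + unitv v x) b = bl W E (unitv v) b - bl W E (unitv u) b"
  unfolding bl_def by (simp add: algebra_simps sum_subtractf sum.distrib)

lemma bl_zero_left: "bl W E (\<lambda>x. 0) b = 0" unfolding bl_def by simp

lemma sum_list_zip: "sum_list (map f (zip P (tl P))) = (\<Sum>k<length P - 1. f (P!k, P!Suc k))"
  by (simp add: sum_list_sum_nth atLeast0LessThan nth_tl)

locale seg =
  fixes V E rs cs
  assumes se: "se_graph V E rs cs"
begin

lemmas S = se[unfolded se_graph_def]

lemma finV: "finite V" using S[THEN conjunct1] by blast
lemma EV: "(u,v)\<in>E \<Longrightarrow> u\<in>V \<and> v\<in>V" using S[THEN conjunct2, THEN conjunct1] by blast
lemma Ehv: "(u,v)\<in>E \<Longrightarrow> hedge u v \<or> vedge u v" using S[THEN conjunct2, THEN conjunct2, THEN conjunct1] by blast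
lemma src_fst: "r \<in> set rs \<Longrightarrow> fst r = 0" using S[THEN conjunct2, THEN conjunct2, THEN conjunct2, THEN conjunct2, THEN conjunct2, THEN conjunct2, THEN conjunct2, THEN conjunct1] by blast
lemma no_in_src: "(u,v)\<in>E \<Longrightarrow> v \<notin> set rs" using S[THEN conjunct2, THEN conjunct2, THEN conjunct2, THEN conjunct2, THEN conjunct2, THEN conjunct2, THEN conjunct2, THEN conjunct2, THEN conjunct1] by blast
lemma no_out_sink: "(u,v)\<in>E \<Longrightarrow> u \<notin> set cs" using S[THEN conjunct2, THEN conjunct2, THEN conjunct2, THEN conjunct2, THEN conjunct2, THEN conjunct2, THEN conjunct2, THEN conjunct2, THEN conjunct2, THEN conjunct2, THEN conjunct2, THEN conjunct2, THEN conjunct2, THEN conjunct1] by blast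
lemma sink_v: "(u,v)\<in>E \<Longrightarrow> v\<in>set cs \<Longrightarrow> vedge u v" using S[THEN conjunct2, THEN conjunct2, THEN conjunct2, THEN conjunct2, THEN conjunct2, THEN conjunct2, THEN conjunct2, THEN conjunct2, THEN conjunct2, THEN conjunct2, THEN conjunct2, THEN conjunct2, THEN conjunct2, THEN conjunct2, THEN conjunct1] by blast
lemma reach: "v\<in>V \<Longrightarrow> \<exists>r\<in>set rs. (r,v)\<in>E\<^sup>*" using S[THEN conjunct2, THEN conjunct2, THEN conjunct2, THEN conjunct2, THEN conjunct2, THEN conjunct2, THEN conjunct2, THEN conjunct2, THEN conjunct2, THEN conjunct2, THEN conjunct2, THEN conjunct2, THEN conjunct2, THEN conjunct2, THEN conjunct2, THEN conjunct2, THEN conjunct1] by blast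
lemma colconv: "u\<in>V \<Longrightarrow> v\<in>V \<Longrightarrow> u\<noteq>v \<Longrightarrow> \<not>(u\<in>set rs \<and> v\<in>set rs) \<Longrightarrow> fst u = fst v
   \<Longrightarrow> (u,v)\<in>(vrel E)\<^sup>+ \<or> (v,u)\<in>(vrel E)\<^sup>+"
  using S[THEN conjunct2, THEN conjunct2, THEN conjunct2, THEN conjunct2, THEN conjunct2, THEN conjunct2, THEN conjunct2, THEN conjunct2, THEN conjunct2, THEN conjunct2, THEN conjunct2, THEN conjunct2, THEN conjunct2, THEN conjunct2, THEN conjunct2, THEN conjunct2, THEN conjunct2, THEN conjunct1] by blast
lemma rowconv: "u\<in>V \<Longrightarrow> v\<in>V \<Longrightarrow> u\<noteq>v \<Longrightarrow> \<not>(u\<in>set cs \<and> v\<in>set cs) \<Longrightarrow> snd u = snd v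
   \<Longrightarrow> (u,v)\<in>(hrel E)\<^sup>+ \<or> (v,u)\<in>(hrel E)\<^sup>+"
  using S[THEN conjunct2, THEN conjunct2, THEN conjunct2, THEN conjunct2, THEN conjunct2, THEN conjunct2, THEN conjunct2, THEN conjunct2, THEN conjunct2, THEN conjunct2, THEN conjunct2, THEN conjunct2, THEN conjunct2, THEN conjunct2, THEN conjunct2, THEN conjunct2, THEN conjunct2, THEN conjunct2] by blast

lemma hv_excl: "hedge u v \<Longrightarrow> \<not> vedge u v" by (auto simp: hedge_def vedge_def)

lemma edge_mono: "(u,v)\<in>E \<Longrightarrow> fst u \<le> fst v \<and> snd v \<le> snd u"
  using Ehv[of u v] by (auto simp: hedge_def vedge_def)

lemma fst_nonneg: assumes "v\<in>V" shows "fst v \<ge> 0"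
proof -
  obtain r where r: "r\<in>set rs" "(r,v)\<in>E\<^sup>*" using reach assms by blast
  from r(2) have "fst r \<le> fst v"
    by (induction rule: rtrancl_induct) (auto dest: edge_mono)
  with src_fst[OF r(1)] show ?thesis by simp
qed

lemma lam_row: "u\<in>V \<Longrightarrow> v\<in>V \<Longrightarrow> \<not>(u\<in>set cs \<and> v\<in>set cs) \<Longrightarrow> snd u = snd v \<Longrightarrow> fst u < fst v \<Longrightarrow> lam E u v = 1"
  using rowconv[of u v] hrel_tr[of u v E] hrel_tr[of v u E] unfolding lam_def by force

lemma lam_col: "u\<in>V \<Longrightarrow> v\<in>V \<Longrightarrow> \<not>(u\<in>set rs \<and> v\<in>set rs) \<Longrightarrow> fst u = fst v \<Longrightarrow> snd v < snd u \<Longrightarrow> lam E u v = -1"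
  using colconv[of u v] hrel_tr[of u v E] vrel_tr[of u v E] vrel_tr[of v u E] unfolding lam_def by force

lemma same_pt: "u\<in>V \<Longrightarrow> v\<in>V \<Longrightarrow> \<not>(u\<in>set rs \<and> v\<in>set rs) \<Longrightarrow> fst u = fst v \<Longrightarrow> snd u = snd v \<Longrightarrow> u = v"
  using colconv[of u v] vrel_tr[of u v E] vrel_tr[of v u E] by force

lemma path_V: assumes "dpath E P" "i < length P" shows "P!i \<in> V"
proof (cases "i < length P - 1")
  case True
  then have "(P!i, P!Suc i) \<in> E" using assms(1) unfolding dpath_def by auto
  then show ?thesis using EV by blast
next
  case False
  then have i: "i = Suc (i - 1)" "i - 1 < length P - 1" using assms unfolding dpath_def by auto
  then have "(P!(i-1), P!Suc (i-1)) \<in> E" using assms(1) unfolding dpath_def by blast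
  then show ?thesis using EV i(1) by metis
qed

lemma path_mono: assumes "dpath E P" "i \<le> j" "j < length P"
  shows "fst (P!i) \<le> fst (P!j) \<and> snd (P!j) \<le> snd (P!i)"
  using assms(2,3)
proof (induction j)
  case 0 then show ?case by simp
next
  case (Suc j)
  show ?case
  proof (cases "i = Suc j")
    case True then show ?thesis by simp
  next
    case False
    with Suc have ij: "i \<le> j" "j < length P" by auto
    have "(P!j, P!Suc j) \<in> E" using assms(1) Suc(3) unfolding dpath_def by auto
    from edge_mono[OF this] Suc.IH[OF ij] show ?thesis by auto
  qed
qed


lemma src_h: "(u,v)\<in>E \<Longrightarrow> u \<in> set rs \<Longrightarrow> hedge u v" using S[THEN conjunct2, THEN conjunct2, THEN conjunct2, THEN conjunct2, THEN conjunct2, THEN conjunct2, THEN conjunct2, THEN conjunct2, THEN conjunct2, THEN conjunct1] by blast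

abbreviation "W \<equiv> inner V rs cs"

lemma finW: "finite W" using finV unfolding inner_def by simp

lemma hedge_W: assumes "(x,y) \<in> E" "hedge x y" shows "y \<in> W"
proof -
  have "y \<notin> set cs" using sink_v[OF assms(1)] hv_excl[OF assms(2)] by blast
  then show ?thesis using EV[OF assms(1)] no_in_src[OF assms(1)] unfolding inner_def by simp
qed

lemma out_W: assumes "(x,y) \<in> E" "x \<notin> set rs" shows "x \<in> W"
  using EV[OF assms(1)] no_out_sink[OF assms(1)] assms(2) unfolding inner_def by simp

definition psi :: "real \<Rightarrow> pt \<Rightarrow> int" where "psi c z = (if fst z = c then 1 else 0)"

lemma key:
  assumes Q: "dpath E Q" "standard E Q" and c: "c = fst (Q!0)" "0 < c"
    and z: "z \<in> W" "fst z \<le> c" "snd (Q!0) \<le> snd z"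
  shows "(\<Sum>m<length Q - 1. bl W E (unitv z) (exv rs (Q!m, Q!Suc m))) = psi c z"
proof -
  define n where "n = length Q - 1"
  define H where "H = (\<lambda>m. m < n \<and> hedge (Q!m) (Q!Suc m))"
  have ex: "\<exists>m. H m" using Q(2) unfolding standard_def H_def n_def by auto
  define i0 where "i0 = (LEAST m. H m)"
  have Hi0: "H i0" using LeastI_ex[OF ex] i0_def by simp
  have noH: "m < i0 \<Longrightarrow> \<not> H m" for m using not_less_Least i0_def by blast
  have edge: "m < n \<Longrightarrow> (Q!m, Q!Suc m) \<in> E" for m using Q(1) unfolding dpath_def n_def by auto
  have len: "length Q = Suc n" using Q(1) unfolding dpath_def n_def by auto
  have zV: "z \<in> V" "z \<notin> set rs" "z \<notin> set cs" using z(1) unfolding inner_def by auto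
  have col: "m \<le> i0 \<Longrightarrow> fst (Q!m) = c" for m
  proof (induction m)
    case 0 show ?case using c by simp
  next
    case (Suc m)
    have "m < n" using Suc.prems Hi0 H_def by auto
    have "\<not> hedge (Q!m) (Q!Suc m)" using noH[of m] Suc.prems \<open>m<n\<close> H_def by auto
    then have "vedge (Q!m) (Q!Suc m)" using Ehv edge \<open>m<n\<close> by blast
    then show ?case using Suc by (auto simp: vedge_def)
  qed
  have notsrc: "Q!m \<notin> set rs" if "m < n" for m
  proof (cases m)
    case 0
    then have "fst (Q!m) \<noteq> 0" using c by simp
    then show ?thesis using src_fst by blast
  next
    case (Suc k)
    then have "k < n" using that by simp
    then have "(Q!k, Q!Suc k) \<in> E" by (rule edge)
    then show ?thesis using no_in_src Suc by blast
  qed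
  have term0: "bl W E (unitv z) (exv rs (Q!m, Q!Suc m)) = 0" if "m < n" "\<not> hedge (Q!m) (Q!Suc m)" for m
    using notsrc[OF that(1)] that(2) unfolding exv_def bl_def by simp
  have termH: "bl W E (unitv z) (exv rs (Q!m, Q!Suc m)) = lam E z (Q!Suc m) - lam E z (Q!m)"
    if "m < n" "hedge (Q!m) (Q!Suc m)" for m
  proof -
    have xW: "Q!m \<in> W" using out_W[OF edge[OF that(1)] notsrc[OF that(1)]] .
    have yW: "Q!Suc m \<in> W" using hedge_W[OF edge[OF that(1)] that(2)] .
    have "bl W E (unitv z) (exv rs (Q!m, Q!Suc m)) =
       (\<Sum>j\<in>W. lam E z j * unitv (Q!Suc m) j) - (\<Sum>j\<in>W. lam E z j * unitv (Q!m) j)"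
      using notsrc[OF that(1)] that(2) z(1)
      unfolding exv_def bl_unit_left[OF finW]
      by (simp add: algebra_simps sum_subtractf sum.distrib)
    then show ?thesis using xW yW by (simp add: bl_unit_right[OF finW])
  qed
  have QV: "m < length Q \<Longrightarrow> Q!m \<in> V" for m using path_V[OF Q(1)] by blast
  have later: "lam E z (Q!Suc m) - lam E z (Q!m) = 0" if "i0 < m" "m < n" "hedge (Q!m) (Q!Suc m)" for m
  proof -
    have "fst (Q!Suc i0) \<le> fst (Q!m)" using path_mono[OF Q(1), of "Suc i0" m] that len by auto
    moreover have "fst (Q!i0) < fst (Q!Suc i0)" using Hi0 H_def hedge_def by auto
    moreover have "fst (Q!i0) = c" using col by simp
    ultimately have f1: "fst z < fst (Q!m)" using z(2) by linarith
    have f2: "fst (Q!m) < fst (Q!Suc m)" "snd (Q!m) = snd (Q!Suc m)" using that(3) hedge_def by auto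
    have V1: "Q!m \<in> V" "Q!Suc m \<in> V" using QV that len by auto
    show ?thesis
    proof (cases "snd z = snd (Q!m)")
      case True
      then show ?thesis using lam_row[OF zV(1) V1(1)] lam_row[OF zV(1) V1(2)] zV(3) f1 f2 by simp
    next
      case False
      then show ?thesis using lam_zero[of z "Q!m" E] lam_zero[of z "Q!Suc m" E] f1 f2 by simp
    qed
  qed
  have first: "lam E z (Q!Suc i0) - lam E z (Q!i0) = psi c z"
  proof -
    have i0n: "i0 < n" using Hi0 H_def by auto
    have fx: "fst (Q!i0) = c" using col by simp
    have f2: "fst (Q!i0) < fst (Q!Suc i0)" "snd (Q!i0) = snd (Q!Suc i0)" using Hi0 H_def hedge_def by auto
    have V1: "Q!i0 \<in> V" "Q!Suc i0 \<in> V" using QV i0n len by auto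
    have sx: "snd (Q!i0) \<le> snd z" using path_mono[OF Q(1), of 0 i0] i0n len z(3) by auto
    show ?thesis
    proof (cases "fst z = c")
      case False
      then have fz: "fst z < c" using z(2) by simp
      show ?thesis
      proof (cases "snd z = snd (Q!i0)")
        case True
        then show ?thesis using lam_row[OF zV(1) V1(1)] lam_row[OF zV(1) V1(2)] zV(3) fz fx f2 False
          by (simp add: psi_def)
      next
        case F2: False
        then show ?thesis using lam_zero[of z "Q!i0" E] lam_zero[of z "Q!Suc i0" E] fz fx f2 False
          by (simp add: psi_def)
      qed
    next
      case True
      show ?thesis
      proof (cases "z = Q!i0")
        case True
        then show ?thesis using lam_refl[of E z] lam_row[OF zV(1) V1(2)] zV(3) f2 fx \<open>fst z = c\<close>
          by (simp add: psi_def)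
      next
        case False
        have "snd z \<noteq> snd (Q!i0)" using same_pt[OF zV(1) V1(1)] zV(2) False True fx by auto
        then have lt: "snd (Q!i0) < snd z" using sx by simp
        have a: "lam E z (Q!i0) = -1" using lam_col[OF zV(1) V1(1)] zV(2) True fx lt by simp
        have b: "lam E z (Q!Suc i0) = 0" using lam_zero[of z "Q!Suc i0" E] True fx f2 lt by simp
        show ?thesis using a b True by (simp add: psi_def)
      qed
    qed
  qed
  have "(\<Sum>m<n. bl W E (unitv z) (exv rs (Q!m, Q!Suc m))) = (\<Sum>m<n. if m = i0 then psi c z else 0)"
  proof (rule sum.cong[OF refl])
    fix m assume "m \<in> {..<n}"
    then have mn: "m < n" by simp
    show "bl W E (unitv z) (exv rs (Q!m, Q!Suc m)) = (if m = i0 then psi c z else 0)"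
    proof (cases "hedge (Q!m) (Q!Suc m)")
      case True
      then have "\<not> m < i0" using noH[of m] H_def mn by auto
      then show ?thesis using termH[OF mn True] later[OF _ mn True] first by (cases "m = i0") auto
    next
      case False
      then have "m \<noteq> i0" using Hi0 H_def by auto
      then show ?thesis using term0[OF mn False] by simp
    qed
  qed
  also have "\<dots> = psi c z" using Hi0 H_def by simp
  finally show ?thesis unfolding n_def .
qed

lemma sumQ:
  assumes Q: "dpath E Q" "standard E Q" and c: "c = fst (Q!0)" "0 < c"
    and P: "dpath E P" "fst (last P) = c" "snd (Q!0) \<le> snd (last P)" and k: "k < length P - 1"
  shows "(\<Sum>m<length Q - 1. bl W E (exv rs (P!k, P!Suc k)) (exv rs (Q!m, Q!Suc m)))
          = psi c (P!Suc k) - psi c (P!k)"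
proof -
  let ?u = "P!k" let ?v = "P!Suc k"
  have e: "(?u, ?v) \<in> E" using P(1) k unfolding dpath_def by auto
  have ne: "P \<noteq> []" using P(1) unfolding dpath_def by auto
  have lastP: "last P = P!(length P - 1)" using ne by (simp add: last_conv_nth)
  have reg: "fst (P!i) \<le> c \<and> snd (Q!0) \<le> snd (P!i)" if "i < length P" for i
  proof -
    have ii: "i \<le> length P - 1" "length P - 1 < length P" using that ne by auto
    have "fst (P!i) \<le> fst (P!(length P - 1)) \<and> snd (P!(length P - 1)) \<le> snd (P!i)"
      by (rule path_mono[OF P(1) ii])
    then show ?thesis using lastP P(2,3) by auto
  qed
  have K: "(\<Sum>m<length Q - 1. bl W E (unitv w) (exv rs (Q!m, Q!Suc m))) = psi c w"
    if "w \<in> W" "fst w \<le> c" "snd (Q!0) \<le> snd w" for w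
    using key[OF Q c that] .
  have ru: "fst ?u \<le> c" "snd (Q!0) \<le> snd ?u" using reg[of k] k by auto
  have rv: "fst ?v \<le> c" "snd (Q!0) \<le> snd ?v" using reg[of "Suc k"] k by auto
  show ?thesis
  proof (cases "?u \<in> set rs")
    case True
    have h: "hedge ?u ?v" using src_h e True by blast
    have vW: "?v \<in> W" using hedge_W[OF e h] .
    have "fst ?u = 0" using src_fst True by blast
    then have p0: "psi c ?u = 0" using c(2) psi_def by simp
    have "exv rs (?u,?v) = unitv ?v" using True exv_def by simp
    then show ?thesis using K[OF vW rv] p0 by simp
  next
    case False
    show ?thesis
    proof (cases "hedge ?u ?v")
      case True
      have vW: "?v \<in> W" using hedge_W[OF e True] .
      have uW: "?u \<in> W" using out_W[OF e False] .
      have ex1: "exv rs (?u,?v) = (\<lambda>x. - unitv ?u x + unitv ?v x)" using False True exv_def by simp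
      have "(\<Sum>m<length Q - 1. bl W E (exv rs (?u, ?v)) (exv rs (Q!m, Q!Suc m)))
         = (\<Sum>m<length Q - 1. bl W E (unitv ?v) (exv rs (Q!m, Q!Suc m)))
           - (\<Sum>m<length Q - 1. bl W E (unitv ?u) (exv rs (Q!m, Q!Suc m)))"
        by (simp only: ex1 bl_hedge_left sum_subtractf)
      then show ?thesis using K[OF vW rv] K[OF uW ru] by simp
    next
      case F2: False
      then have "vedge ?u ?v" using Ehv e by blast
      then have "psi c ?u = psi c ?v" by (simp add: vedge_def psi_def)
      moreover have "exv rs (?u,?v) = (\<lambda>x. 0)" using False F2 exv_def by simp
      ultimately show ?thesis by (simp add: bl_zero_left)
    qed
  qed
qed

end

theorem lemmaA4:
  fixes V :: "pt set" and E :: "(pt \<times> pt) set" and rs cs P Q :: "pt list"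
    and q :: "'k::field"
  assumes "se_graph V E rs cs"
    and "q \<noteq> 0"
    and "dpath E P" and "dpath E Q"
    and "standard E P" and "standard E Q"
    and "weakly_intersecting P Q"
    and "fst (last P) = fst (hd Q)"
    and "snd (last P) \<ge> snd (hd Q)"
  shows "qmul V E rs cs q (pwt V E rs cs q P) (pwt V E rs cs q Q)
       = (\<lambda>c. q * qmul V E rs cs q (pwt V E rs cs q Q) (pwt V E rs cs q P) c)"
proof -
  interpret seg V E rs cs by (rule seg.intro) (rule assms(1))
  define aP where "aP = (\<lambda>x. sum_list (map (\<lambda>e. exv rs e x) (zip P (tl P))))"
  define aQ where "aQ = (\<lambda>x. sum_list (map (\<lambda>e. exv rs e x) (zip Q (tl Q))))"
  obtain \<gamma> where g: "\<gamma> \<noteq> 0" "pwt V E rs cs q P = sm \<gamma> aP"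
    using pwt_sm[OF assms(2), of V E rs cs P] unfolding aP_def by blast
  obtain \<delta> where d: "\<delta> \<noteq> 0" "pwt V E rs cs q Q = sm \<delta> aQ"
    using pwt_sm[OF assms(2), of V E rs cs Q] unfolding aQ_def by blast
  have neP: "P \<noteq> []" using assms(3) unfolding dpath_def by auto
  have neQ: "Q \<noteq> []" using assms(4) unfolding dpath_def by auto
  define c where "c = fst (last P)"
  have lastP: "last P = P!(length P - 1)" using neP by (simp add: last_conv_nth)
  have hdQ: "hd Q = Q!0" using neQ by (simp add: hd_conv_nth)
  obtain i where i: "i < length P - 1" "hedge (P!i) (P!Suc i)"
    using assms(5) unfolding standard_def by blast
  have "fst (P!0) \<le> fst (P!i)" using path_mono[OF assms(3), of 0 i] i by auto
  moreover have "fst (P!i) < fst (P!Suc i)" using i(2) hedge_def by auto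
  moreover have "fst (P!Suc i) \<le> c" using path_mono[OF assms(3), of "Suc i" "length P - 1"] i lastP c_def by auto
  moreover have "0 \<le> fst (P!0)" using fst_nonneg path_V[OF assms(3), of 0] neP by auto
  ultimately have c0: "0 < c" "fst (P!0) < c" by linarith+
  have cQ: "c = fst (Q!0)" using assms(8) hdQ c_def by simp
  have sQ: "snd (Q!0) \<le> snd (last P)" using assms(9) hdQ by simp
  have aPs: "aP = (\<lambda>x. \<Sum>k<length P - 1. exv rs (P!k, P!Suc k) x)"
    unfolding aP_def by (simp add: sum_list_zip)
  have aQs: "aQ = (\<lambda>x. \<Sum>m<length Q - 1. exv rs (Q!m, Q!Suc m) x)"
    unfolding aQ_def by (simp add: sum_list_zip)
  have "bl W E aP aQ = (\<Sum>k<length P - 1. \<Sum>m<length Q - 1.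
           bl W E (exv rs (P!k, P!Suc k)) (exv rs (Q!m, Q!Suc m)))"
    unfolding aPs aQs bl_sum_left bl_sum_right ..
  also have "\<dots> = (\<Sum>k<length P - 1. psi c (P!Suc k) - psi c (P!k))"
    by (rule sum.cong[OF refl]) (use sumQ[OF assms(4) assms(6) cQ c0(1) assms(3) c_def[symmetric] sQ] in simp)
  also have "\<dots> = psi c (P!(length P - 1)) - psi c (P!0)"
    by (rule sum_lessThan_telescope)
  also have "\<dots> = 1" using lastP c_def c0(2) by (simp add: psi_def)
  finally have b1: "bl W E aP aQ = 1" .
  have t: "twist V E rs cs aP aQ = twist V E rs cs aQ aP + 1"
    using twist_diff[OF finW, of E aP aQ] b1 by simp
  show ?thesis by (rule final_alg[OF assms(2) g(2) g(1) d(2) d(1) t])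
qed

end
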